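(* Let $a,c>0$ and $b,d<0$ be real numbers with $x_A<x_B$, and let $W_0(z)=1$, $W_1(z)=z$, $W_n(z)=(az+b)W_{n-1}(z)+(cz+d)W_{n-2}(z)$ for $n\ge2$. Then every $W_n(z)$ is real-rooted with $n$ distinct zeros; denoting by $R_n$ the zero set of $W_n(z)$, we have $R_n\subset(u,v)$ and $R_{n+1}$ strictly interlaces $R_n$ for every $n\ge0$. Moreover, the bound is sharp: both $u$ and $v$ are limits of zeros of $\{W_n(z)\}$.
   Context: Notation: $A(z)=az+b$, $B(z)=cz+d$, $x_A=-b/a$, $x_B=-d/c$, $\Delta_\Delta=c^2-a^2B(x_A)$, $x_\Delta^\pm=x_A+\frac{-2c\pm2\sqrt{\Delta_\Delta}}{a^2}$, $g(z)=(1-a)z^2-(b+c)z-d$, $\Delta_g=(b+c)^2+4d(1-a)$, $F=\Delta_g-\Delta_\Delta=d(a-2)^2+bc(2-a)+b^2$. The zeros of $g$ are $x_g^\pm=\frac{b+c}{2(1-a)}\pm\frac{\sqrt{\Delta_g}}{2|1-a|}$ if $a\neq1$, and $x_g^\pm=-d/(b+c)$ if $a=1$ and $b+c\ne0$. Define $(u,v)=(x_\Delta^-,x_\Delta^+)$ if $a<2$ and $F\le0$; $(u,v)=(x_g^-,x_g^+)$ if $a>2$ and $F<0$; $(u,v)=(x_g^+,x_\Delta^+)$ if $a<1$ and $F>0$; and $(u,v)=(x_g^-,x_\Delta^+)$ otherwise. For finite $X,Y\subset\mathbb{R}$ with $|X|-|Y|\in\{0,1\}$, $X$ strictly interlaces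 $Y$ if their elements can be ordered as $x_1<y_1<x_2<y_2<\cdots$. A number $z^*$ is a limit of zeros if there exist zeros $z_n$ of $W_n$ with $z_n\to z^*$. *)

theory Defs
  imports "HOL-Analysis.Analysis" "HOL-Computational_Algebra.Polynomial"
begin

fun W :: "real \<Rightarrow> real \<Rightarrow> real \<Rightarrow> real \<Rightarrow> nat \<Rightarrow> real poly" where
  "W a b c d 0 = 1"
| "W a b c d (Suc 0) = [:0, 1:]"
| "W a b c d (Suc (Suc n)) = [:b, a:] * W a b c d (Suc n) + [:d, c:] * W a b c d n"

definition xA :: "real \<Rightarrow> real \<Rightarrow> real" where "xA a b = - b / a"
definition xB :: "real \<Rightarrow> real \<Rightarrow> real" where "xB c d = - d / c"

definition DeltaDelta :: "real \<Rightarrow> real \<Rightarrow> real \<Rightarrow> real \<Rightarrow> real" where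
  "DeltaDelta a b c d = c^2 - a^2 * (c * xA a b + d)"

definition xDelta_minus :: "real \<Rightarrow> real \<Rightarrow> real \<Rightarrow> real \<Rightarrow> real" where
  "xDelta_minus a b c d = xA a b + (- 2 * c - 2 * sqrt (DeltaDelta a b c d)) / a^2"
definition xDelta_plus :: "real \<Rightarrow> real \<Rightarrow> real \<Rightarrow> real \<Rightarrow> real" where
  "xDelta_plus a b c d = xA a b + (- 2 * c + 2 * sqrt (DeltaDelta a b c d)) / a^2"

definition Delta_g :: "real \<Rightarrow> real \<Rightarrow> real \<Rightarrow> real \<Rightarrow> real" where
  "Delta_g a b c d = (b + c)^2 + 4 * d * (1 - a)"

definition Fq :: "real \<Rightarrow> real \<Rightarrow> real \<Rightarrow> real \<Rightarrow> real" where
  "Fq a b c d = Delta_g a b c d - DeltaDelta a b c d"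

definition xg_minus :: "real \<Rightarrow> real \<Rightarrow> real \<Rightarrow> real \<Rightarrow> real" where
  "xg_minus a b c d = (if a \<noteq> 1 then (b + c) / (2 * (1 - a)) - sqrt (Delta_g a b c d) / (2 * \<bar>1 - a\<bar>)
                      else - d / (b + c))"
definition xg_plus :: "real \<Rightarrow> real \<Rightarrow> real \<Rightarrow> real \<Rightarrow> real" where
  "xg_plus a b c d = (if a \<noteq> 1 then (b + c) / (2 * (1 - a)) + sqrt (Delta_g a b c d) / (2 * \<bar>1 - a\<bar>)
                      else - d / (b + c))"

definition bound_u :: "real \<Rightarrow> real \<Rightarrow> real \<Rightarrow> real \<Rightarrow> real" where
  "bound_u a b c d =
     (if a < 2 \<and> Fq a b c d \<le> 0 then xDelta_minus a b c d
      else if a > 2 \<and> Fq a b c d < 0 then xg_minus a b c d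
      else if a < 1 \<and> Fq a b c d > 0 then xg_plus a b c d
      else xg_minus a b c d)"

definition bound_v :: "real \<Rightarrow> real \<Rightarrow> real \<Rightarrow> real \<Rightarrow> real" where
  "bound_v a b c d =
     (if a < 2 \<and> Fq a b c d \<le> 0 then xDelta_plus a b c d
      else if a > 2 \<and> Fq a b c d < 0 then xg_plus a b c d
      else xDelta_plus a b c d)"

definition strictly_interlaces :: "real set \<Rightarrow> real set \<Rightarrow> bool" where
  "strictly_interlaces X Y \<longleftrightarrow> finite X \<and> finite Y \<and>
     (card X = card Y \<or> card X = card Y + 1) \<and>
     (let xs = sorted_list_of_set X; ys = sorted_list_of_set Y in
        \<forall>i < length ys. xs ! i < ys ! i \<and> (Suc i < length xs \<longrightarrow> ys ! i < xs ! Suc i))"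

definition limit_of_zeros :: "(nat \<Rightarrow> real poly) \<Rightarrow> real \<Rightarrow> bool" where
  "limit_of_zeros P zs \<longleftrightarrow>
     (\<exists>z :: nat \<Rightarrow> complex. (\<forall>\<^sub>F n in sequentially. poly (map_poly of_real (P n)) (z n) = 0)
        \<and> z \<longlonglongrightarrow> complex_of_real zs)"

end

theory Submission
  imports Defs
begin


lemma seq_root_pow:
  fixes f :: "nat \<Rightarrow> real"
  assumes rec: "\<And>n. f (Suc (Suc n)) = \<alpha> * f (Suc n) + \<beta> * f n"
    and f0: "f 0 = 1" and f1: "f 1 = x" and r: "x^2 = \<alpha> * x + \<beta>"
  shows "f n = x ^ n"
proof (induction n rule: less_induct)
  case (less n)
  show ?case
  proof (cases n)
    case 0 then show ?thesis using f0 by simp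
  next
    case (Suc m)
    show ?thesis
    proof (cases m)
      case 0 then show ?thesis using f1 Suc by simp
    next
      case (Suc k)
      have "f n = \<alpha> * x^(Suc k) + \<beta> * x^k" using rec less Suc \<open>n = Suc m\<close> by simp
      also have "\<dots> = x^k * (\<alpha> * x + \<beta>)" by (simp add: algebra_simps)
      also have "\<dots> = x^n" using r Suc \<open>n = Suc m\<close> by (simp add: power2_eq_square)
      finally show ?thesis .
    qed
  qed
qed

lemma seq_pos:
  fixes f :: "nat \<Rightarrow> real"
  assumes rec: "\<And>n. f (Suc (Suc n)) = \<alpha> * f (Suc n) + \<beta> * f n"
    and f0: "f 0 = 1" and f1: "f 1 = x" and r: "\<mu>^2 = \<alpha> * \<mu> + \<beta>"
    and mu: "\<mu> > 0" "\<alpha> - \<mu> \<ge> 0" "x \<ge> \<mu>"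
  shows "f n > 0"
proof -
  have D: "f (Suc n) - \<mu> * f n = (\<alpha> - \<mu>)^n * (x - \<mu>)" for n
  proof (induction n)
    case 0 then show ?case using f0 f1 by simp
  next
    case (Suc n)
    have "f (Suc (Suc n)) - \<mu> * f (Suc n) = (\<alpha> - \<mu>) * (f (Suc n) - \<mu> * f n)"
    proof -
      have b: "\<beta> = \<mu>*\<mu> - \<alpha>*\<mu>" using r by (simp add: power2_eq_square)
      show ?thesis using rec[of n] unfolding b by (simp add: algebra_simps)
    qed
    then show ?case using Suc by simp
  qed
  have "f (Suc n) \<ge> \<mu> * f n" for n
    using D[of n] mu by (smt (verit) mult_nonneg_nonneg zero_le_power)
  note st = this
  show ?thesis
  proof (induction n)
    case 0 then show ?case using f0 by simp
  next
    case (Suc n) then show ?case using st[of n] mu(1) by (smt (verit) mult_pos_pos)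
  qed
qed


lemma seq_osc:
  fixes f :: "nat \<Rightarrow> real"
  assumes rec: "\<And>n. f (Suc (Suc n)) = \<alpha> * f (Suc n) + \<beta> * f n"
    and f0: "f 0 = 1" and D: "\<alpha>^2 + 4*\<beta> < 0"
  shows "\<exists>n. f n < 0"
proof (rule ccontr)
  assume "\<not> ?thesis"
  then have nn: "\<And>n. f n \<ge> 0" by (simp add: not_less)
  have bneg: "\<beta> < 0" using D by (smt (verit) zero_le_power2)
  define \<rho> where "\<rho> = sqrt (-\<beta>)"
  have rho: "\<rho> > 0" "\<rho>^2 = -\<beta>" using bneg by (auto simp: \<rho>_def)
  define g where "g n = f n / \<rho>^n" for n
  define t where "t = \<alpha> / \<rho>"
  have grec: "g (Suc (Suc n)) = t * g (Suc n) - g n" for n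
  proof -
    have "g (Suc (Suc n)) = (\<alpha> * f (Suc n) + \<beta> * f n) / \<rho>^(Suc (Suc n))"
      by (simp add: g_def rec)
    also have "\<dots> = t * g (Suc n) + (\<beta> / \<rho>^2) * g n"
      using rho(1) by (simp add: g_def t_def field_simps power2_eq_square)
    also have "\<beta> / \<rho>^2 = -1" using rho bneg by simp
    finally show ?thesis by simp
  qed
  have g0: "g 0 = 1" by (simp add: g_def f0)
  have gnn: "g n \<ge> 0" for n using nn[of n] rho(1) by (simp add: g_def)
  have t2: "t^2 < 4"
  proof -
    have "t^2 = \<alpha>^2 / (-\<beta>)" using rho by (simp add: t_def power_divide)
    also have "\<dots> < 4" using D bneg by (subst pos_divide_less_eq) auto
    finally show ?thesis .
  qed
  define E where "E n = g (Suc n)^2 - t * g (Suc n) * g n + g n ^2" for n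
  have Es: "E (Suc n) = E n" for n
    unfolding E_def grec by (simp add: algebra_simps power2_eq_square)
  have Ec: "E n = E 0" for n by (induction n) (simp_all add: Es)
  have E0: "E 0 > 0"
  proof -
    have "E 0 = (g 1 - t/2)^2 + (1 - t^2/4)" by (simp add: E_def g0 power2_eq_square algebra_simps)
    moreover have "(g 1 - t/2)^2 \<ge> 0" by simp
    ultimately show ?thesis using t2 by linarith
  qed
  show False
  proof (cases "t \<le> 0")
    case True
    have "g 2 = t * g 1 - 1" using grec[of 0] g0 by (simp add: numeral_2_eq_2)
    moreover have "t * g 1 \<le> 0" using True gnn[of 1] by (simp add: mult_nonpos_nonneg)
    ultimately show False using gnn[of 2] by linarith
  next
    case False
    then have tp: "t > 0" by simp
    have c: "1 - t^2/4 > 0" using t2 by simp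
    have Eb: "E 0 \<ge> (1 - t^2/4) * g n ^2" for n
    proof -
      have "E n = (g (Suc n) - t/2 * g n)^2 + (1 - t^2/4) * g n^2"
        by (simp add: E_def power2_eq_square algebra_simps)
      then show ?thesis using Ec[of n] by (smt (verit) zero_le_power2)
    qed
    define K where "K = 1 + E 0 / (1 - t^2/4)"
    have gK: "g n \<le> K" for n
    proof -
      have "g n ^2 \<le> E 0 / (1 - t^2/4)" using Eb[of n] c by (simp add: le_divide_eq mult.commute)
      moreover have "g n \<le> 1 + g n^2" by (smt (verit) power2_eq_square zero_le_square mult_le_cancel_left1)
      ultimately show ?thesis unfolding K_def by linarith
    qed
    have Sid: "(2 - t) * (\<Sum>k<N. g (Suc k)) = g 1 - g 0 + g N - g (Suc N)" for N
    proof (induction N)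
      case 0 then show ?case by simp
    next
      case (Suc N)
      have "(2 - t) * (\<Sum>k<Suc N. g (Suc k)) = (2-t) * (\<Sum>k<N. g (Suc k)) + (2-t) * g (Suc N)"
        by (simp add: algebra_simps)
      also have "\<dots> = g 1 - g 0 + g (Suc N) - g (Suc (Suc N))"
        using Suc grec[of N] by (simp add: algebra_simps)
      finally show ?case .
    qed
    have t2': "t < 2"
    proof (rule ccontr)
      assume "\<not> t < 2" then have "t^2 \<ge> 2^2" by (intro power_mono) auto
      then show False using t2 by simp
    qed
    have Sb: "(\<Sum>k<N. g (Suc k)) \<le> (g 1 - g 0 + K) / (2 - t)" for N
    proof -
      have "(2 - t) * (\<Sum>k<N. g (Suc k)) \<le> g 1 - g 0 + K"
        using Sid[of N] gK[of N] gnn[of "Suc N"] by linarith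
      then show ?thesis using t2' by (simp add: le_divide_eq mult.commute)
    qed
    have "summable (\<lambda>k. g (Suc k))"
      by (rule summableI_nonneg_bounded[OF gnn Sb])
    then have "(\<lambda>k. g (Suc k)) \<longlonglongrightarrow> 0" by (rule summable_LIMSEQ_zero)
    then have gl: "g \<longlonglongrightarrow> 0" by (rule LIMSEQ_imp_Suc)
    have "(\<lambda>n. g (Suc n)^2 - t * g (Suc n) * g n + g n ^2) \<longlonglongrightarrow> 0^2 - t * 0 * 0 + 0^2"
      using gl \<open>(\<lambda>k. g (Suc k)) \<longlonglongrightarrow> 0\<close>
      by (intro tendsto_intros) auto
    then have "E \<longlonglongrightarrow> 0" by (simp add: E_def[abs_def])
    moreover have "E \<longlonglongrightarrow> E 0" by (rule tendsto_eventually) (use Ec in simp)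
    ultimately have "E 0 = 0" using LIMSEQ_unique by blast
    then show False using E0 by simp
  qed
qed

lemma seq_real_neg:
  fixes f :: "nat \<Rightarrow> real"
  assumes rec: "\<And>n. f (Suc (Suc n)) = \<alpha> * f (Suc n) + \<beta> * f n"
    and f0: "f 0 = 1" and f1: "f 1 = x" and D: "\<alpha>^2 + 4*\<beta> > 0"
    and bneg: "\<beta> < 0" and apos: "\<alpha> > 0" and h: "2*x < \<alpha>" and g: "x^2 - \<alpha>*x - \<beta> > 0"
  shows "\<exists>n. f n < 0"
proof -
  define s where "s = sqrt (\<alpha>^2 + 4*\<beta>)"
  have s: "s > 0" "s^2 = \<alpha>^2 + 4*\<beta>" using D by (auto simp: s_def)
  have sa: "s < \<alpha>"
  proof -
    have "s^2 < \<alpha>^2" using s bneg by simp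
    then show ?thesis using apos s(1) by (smt (verit) power_mono)
  qed
  have sx: "s < \<alpha> - 2*x"
  proof -
    have "s^2 < (\<alpha> - 2*x)^2" using s g by (simp add: power2_eq_square algebra_simps)
    then show ?thesis using h s(1) by (smt (verit) power_mono)
  qed
  define l1 where "l1 = (\<alpha> - s)/2"
  define l2 where "l2 = (\<alpha> + s)/2"
  have l: "0 < l1" "l1 < l2" "x < l1" using sa sx s by (auto simp: l1_def l2_def)
  have sum: "l1 + l2 = \<alpha>" by (simp add: l1_def l2_def field_simps)
  have prod: "l1 * l2 = -\<beta>"
  proof -
    have "l1 * l2 = (\<alpha>^2 - s^2)/4" by (simp add: l1_def l2_def power2_eq_square algebra_simps)
    then show ?thesis using s by simp
  qed
  have D1: "f (Suc n) - l1 * f n = l2^n * (x - l1)" for n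
  proof (induction n)
    case 0 then show ?case using f0 f1 by simp
  next
    case (Suc n)
    have "f (Suc (Suc n)) - l1 * f (Suc n) = l2 * (f (Suc n) - l1 * f n)"
    proof -
      have a: "\<alpha> = l1 + l2" and b: "\<beta> = - (l1 * l2)" using sum prod by simp_all
      show ?thesis using rec[of n] unfolding a b by (simp add: algebra_simps)
    qed
    then show ?case using Suc by simp
  qed
  have D2: "f (Suc n) - l2 * f n = l1^n * (x - l2)" for n
  proof (induction n)
    case 0 then show ?case using f0 f1 by simp
  next
    case (Suc n)
    have "f (Suc (Suc n)) - l2 * f (Suc n) = l1 * (f (Suc n) - l2 * f n)"
    proof -
      have a: "\<alpha> = l1 + l2" and b: "\<beta> = - (l1 * l2)" using sum prod by simp_all
      show ?thesis using rec[of n] unfolding a b by (simp add: algebra_simps)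
    qed
    then show ?case using Suc by simp
  qed
  have Fn: "(l2 - l1) * f n = l2^n * (x - l1) - l1^n * (x - l2)" for n
    using D1[of n] D2[of n] by (simp add: algebra_simps)
  obtain n where n: "(l1/l2)^n < (l1 - x)/(l2 - x)"
    using real_arch_pow_inv[of "(l1 - x)/(l2 - x)" "l1/l2"] l by auto
  have "l1^n * (l2 - x) < l2^n * (l1 - x)"
  proof -
    have "l1^n / l2^n < (l1 - x)/(l2 - x)" using n by (simp add: power_divide)
    then show ?thesis using l by (simp add: divide_less_eq less_divide_eq mult.commute)
  qed
  then have "(l2 - l1) * f n < 0" using Fn[of n] by (simp add: algebra_simps)
  then have "f n < 0" using l by (simp add: mult_less_0_iff)
  then show ?thesis by blast
qed


lemma W_rec_poly: "poly (W a b c d (Suc (Suc n))) x = (a*x+b) * poly (W a b c d (Suc n)) x + (c*x+d) * poly (W a b c d n) x"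
  by (simp add: algebra_simps)

lemma W_degree_le: "degree (W a b c d n) \<le> n"
proof (induction n rule: less_induct)
  case (less n)
  show ?case
  proof (cases n)
    case 0 then show ?thesis by simp
  next
    case (Suc m)
    show ?thesis
    proof (cases m)
      case 0 then show ?thesis using Suc by simp
    next
      case (Suc k)
      have a1: "degree [:b, a:] \<le> 1" by (cases "a = 0") auto
      have c1: "degree [:d, c:] \<le> 1" by (cases "c = 0") auto
      have d1: "degree ([:b, a:] * W a b c d (Suc k)) \<le> Suc (Suc k)"
      proof -
        have "degree ([:b, a:] * W a b c d (Suc k)) \<le> degree [:b, a:] + degree (W a b c d (Suc k))"
          by (rule degree_mult_le)
        also have "\<dots> \<le> 1 + Suc k" using less[of "Suc k"] Suc \<open>n = Suc m\<close> a1 by (intro add_mono) auto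
        finally show ?thesis by simp
      qed
      have d2: "degree ([:d, c:] * W a b c d k) \<le> Suc (Suc k)"
      proof -
        have "degree ([:d, c:] * W a b c d k) \<le> degree [:d, c:] + degree (W a b c d k)"
          by (rule degree_mult_le)
        also have "\<dots> \<le> 1 + k" using less[of k] Suc \<open>n = Suc m\<close> c1 by (intro add_mono) auto
        finally show ?thesis by simp
      qed
      show ?thesis using Suc \<open>n = Suc m\<close> d1 d2 by (simp add: degree_add_le)
    qed
  qed
qed

lemma opp_sign:
  fixes x p q :: real
  assumes "x * p < 0" "x * q > 0" shows "p * q < 0"
proof -
  have "(x*p)*(x*q) < 0" using mult_neg_pos[OF assms] .
  then have "(x*x)*(p*q) < 0" by (simp add: ac_simps)
  then show ?thesis by (metis mult_less_0_iff not_square_less_zero)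
qed

lemma sign_const:
  fixes p :: "real poly"
  assumes "\<sigma> * poly p s > 0" and "\<And>y. min s t \<le> y \<Longrightarrow> y \<le> max s t \<Longrightarrow> poly p y \<noteq> 0"
  shows "\<sigma> * poly p t > 0"
proof (rule ccontr)
  assume "\<not> ?thesis"
  moreover have "poly p t \<noteq> 0" using assms(2)[of t] by simp
  moreover have "\<sigma> \<noteq> 0" using assms(1) by auto
  ultimately have "\<sigma> * poly p t < 0" by (simp add: not_less order.order_iff_strict)
  then have "poly p t * poly p s < 0" using assms(1) by (rule opp_sign)
  then have neg: "poly p s * poly p t < 0" by (simp add: mult.commute)
  have "s \<noteq> t" using neg not_square_less_zero by metis
  then consider "s < t" | "t < s" by linarith
  then show False
  proof cases
    case 1
    then obtain y where "s < y" "y < t" "poly p y = 0" using poly_IVT[OF 1 neg] by auto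
    then show False using assms(2)[of y] by simp
  next
    case 2
    have "poly p t * poly p s < 0" using neg by (simp add: mult.commute)
    then obtain y where "t < y" "y < s" "poly p y = 0" using poly_IVT[OF 2] by auto
    then show False using assms(2)[of y] by simp
  qed
qed

locale ilace =
  fixes a b c d u v :: real
  assumes u0: "u < 0" and v0: "0 < v"
    and Bneg: "\<And>x. x < v \<Longrightarrow> c*x + d < 0"
    and Wv: "\<And>n. poly (W a b c d n) v > 0"
    and Wu: "\<And>n. (-1)^n * poly (W a b c d n) u > 0"
begin

abbreviation P where "P \<equiv> W a b c d"

definition Lp :: "(nat \<Rightarrow> real) \<Rightarrow> nat \<Rightarrow> nat \<Rightarrow> real" where
  "Lp r n i = (if i = 0 then u else r (i - 1))"
definition Rp :: "(nat \<Rightarrow> real) \<Rightarrow> nat \<Rightarrow> nat \<Rightarrow> real" where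
  "Rp r n i = (if i = n then v else r i)"

definition K :: "nat \<Rightarrow> (nat \<Rightarrow> real) \<Rightarrow> bool" where
  "K n r \<longleftrightarrow> (\<forall>i j. i < j \<longrightarrow> j < n \<longrightarrow> r i < r j) \<and> (\<forall>i<n. u < r i \<and> r i < v)
     \<and> {x. poly (P n) x = 0} = r ` {..<n}
     \<and> (\<forall>i\<le>n. \<forall>t. Lp r n i < t \<longrightarrow> t < Rp r n i \<longrightarrow> (-1)^(n-i) * poly (P n) t > 0)"

lemma P_ne: "P n \<noteq> 0" using Wv[of n] by auto

lemma step:
  assumes Kn: "K n r" and Ks: "K (Suc n) s" and I: "\<forall>i<n. s i < r i \<and> r i < s (Suc i)"
  shows "\<exists>q. K (Suc (Suc n)) q \<and> (\<forall>i<Suc n. q i < s i \<and> s i < q (Suc i))"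
proof -
  define m where "m = Suc (Suc n)"
  have smono: "\<And>i j. i < j \<Longrightarrow> j < Suc n \<Longrightarrow> s i < s j"
    and srange: "\<And>i. i < Suc n \<Longrightarrow> u < s i \<and> s i < v"
    and sroot: "\<And>i. i < Suc n \<Longrightarrow> poly (P (Suc n)) (s i) = 0"
    using Ks unfolding K_def by auto
  have rsign: "\<And>i t. i \<le> n \<Longrightarrow> Lp r n i < t \<Longrightarrow> t < Rp r n i \<Longrightarrow> (-1)^(n-i) * poly (P n) t > 0"
    using Kn unfolding K_def by auto
  define e where "e j = (if j = 0 then u else if j \<le> Suc n then s (j-1) else v)" for j
  have estep: "e j < e (Suc j)" if "j \<le> Suc n" for j
  proof (cases "j = 0")
    case True then show ?thesis using srange[of 0] by (simp add: e_def)
  next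
    case False
    show ?thesis
    proof (cases "j = Suc n")
      case True then show ?thesis using srange[of n] by (simp add: e_def)
    next
      case False
      then show ?thesis using \<open>j \<noteq> 0\<close> that smono[of "j-1" j] by (simp add: e_def)
    qed
  qed
  have emono: "e i \<le> e (i + k)" if "i + k \<le> m" for i k
    using that
  proof (induction k)
    case 0 then show ?case by simp
  next
    case (Suc k)
    then have "e i \<le> e (i + k)" by simp
    also have "e (i + k) < e (Suc (i + k))" using Suc.prems by (intro estep) (simp add: m_def)
    finally show ?case by simp
  qed
  have emono': "e i \<le> e j" if "i \<le> j" "j \<le> m" for i j
    using emono[of i "j - i"] that by simp
  have e0: "e 0 = u" and em: "e m = v" by (simp_all add: e_def m_def)
  have esign: "(-1)^(m - j) * poly (P m) (e j) > 0" if "j \<le> m" for j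
  proof -
    consider "j = 0" | "j = m" | "0 < j" "j < m" using \<open>j \<le> m\<close> by (cases "j = 0"; cases "j = m") auto
    then show ?thesis
    proof cases
      case 1 then show ?thesis using Wu[of m] by (simp add: e0)
    next
      case 2 then show ?thesis using Wv[of m] by (simp add: em)
    next
      case 3
      define i where "i = j - 1"
      have i: "i \<le> n" "j = Suc i" using 3 by (auto simp: i_def m_def)
      have ej: "e j = s i" using i by (simp add: e_def)
      have Lt: "Lp r n i < s i"
      proof (cases "i = 0")
        case True then show ?thesis using srange[of 0] by (simp add: Lp_def)
      next
        case False
        then show ?thesis using I[rule_format, of "i - 1"] i by (simp add: Lp_def)
      qed
      have Rt: "s i < Rp r n i"
      proof (cases "i = n")
        case True then show ?thesis using srange[of n] by (simp add: Rp_def)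
      next
        case False
        then show ?thesis using I[rule_format, of i] i by (simp add: Rp_def)
      qed
      have sg: "(-1)^(n-i) * poly (P n) (s i) > 0" using rsign[OF i(1) Lt Rt] .
      have B: "c * s i + d < 0" using Bneg srange[of i] i by simp
      have pm: "poly (P m) (s i) = (c * s i + d) * poly (P n) (s i)"
        using W_rec_poly[of a b c d n "s i"] sroot[of i] i by (simp add: m_def)
      have mj: "m - j = Suc (n - i)" using i by (simp add: m_def)
      have "(-1)^(m-j) * poly (P m) (e j) = (-(c * s i + d)) * ((-1)^(n-i) * poly (P n) (s i))"
        unfolding mj ej pm by (simp add: algebra_simps)
      also have "\<dots> > 0" using B sg by simp
      finally show ?thesis .
    qed
  qed
  have ex: "\<exists>z. e j < z \<and> z < e (Suc j) \<and> poly (P m) z = 0" if "j \<le> Suc n" for j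
  proof -
    have j1: "j \<le> m" "Suc j \<le> m" using that by (simp_all add: m_def)
    have s1: "(-1)^(m - j) * poly (P m) (e j) > 0" using esign[OF j1(1)] .
    have s2: "(-1)^(m - Suc j) * poly (P m) (e (Suc j)) > 0" using esign[OF j1(2)] .
    have mj: "m - j = Suc (m - Suc j)" using that by (simp add: m_def)
    have "(-1)^(m - Suc j) * poly (P m) (e j) < 0" using s1 unfolding mj by simp
    then have "poly (P m) (e j) * poly (P m) (e (Suc j)) < 0" using s2 by (rule opp_sign)
    then show ?thesis using poly_IVT[OF estep[OF that]] by auto
  qed
  define q where "q j = (SOME z. e j < z \<and> z < e (Suc j) \<and> poly (P m) z = 0)" for j
  have q: "e j < q j \<and> q j < e (Suc j) \<and> poly (P m) (q j) = 0" if "j \<le> Suc n" for j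
    unfolding q_def using someI_ex[OF ex[OF that]] .
  have qmono: "q i < q j" if "i < j" "j < m" for i j
  proof -
    have "q i < e (Suc i)" using q[of i] that by (simp add: m_def)
    also have "e (Suc i) \<le> e j" using that by (intro emono') auto
    also have "e j < q j" using q[of j] that by (simp add: m_def)
    finally show ?thesis .
  qed
  have qrange: "u < q i \<and> q i < v" if "i < m" for i
  proof -
    have "u \<le> e i" using emono'[of 0 i] that e0 by simp
    moreover have "e (Suc i) \<le> v" using emono'[of "Suc i" m] that em by simp
    ultimately show ?thesis using q[of i] that by (simp add: m_def)
  qed
  have roots: "{x. poly (P m) x = 0} = q ` {..<m}"
  proof -
    have sub: "q ` {..<m} \<subseteq> {x. poly (P m) x = 0}" using q by (auto simp: m_def)
    have fin: "finite {x. poly (P m) x = 0}" using poly_roots_finite[OF P_ne] .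
    have inj: "inj_on q {..<m}"
    proof (rule inj_onI)
      fix i j assume "i \<in> {..<m}" "j \<in> {..<m}" "q i = q j"
      then show "i = j" using qmono[of i j] qmono[of j i] by (metis lessThan_iff linorder_neqE_nat less_irrefl)
    qed
    have c1: "card (q ` {..<m}) = m" using card_image[OF inj] by simp
    have "card {x. poly (P m) x = 0} \<le> degree (P m)" by (rule card_poly_roots_bound[OF P_ne])
    also have "\<dots> \<le> m" by (rule W_degree_le)
    finally have "card {x. poly (P m) x = 0} \<le> card (q ` {..<m})" using c1 by simp
    moreover have "card (q ` {..<m}) \<le> card {x. poly (P m) x = 0}" by (rule card_mono[OF fin sub])
    ultimately show ?thesis using card_subset_eq[OF fin sub] by simp
  qed
  have qsign: "(-1)^(m-i) * poly (P m) t > 0" if i: "i \<le> m" and t: "Lp q m i < t" "t < Rp q m i" for i t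
  proof (rule sign_const[OF esign[OF i]])
    have LeR: "Lp q m i \<le> e i \<and> e i \<le> Rp q m i"
    proof -
      have "Lp q m i \<le> e i"
      proof (cases "i = 0")
        case True then show ?thesis by (simp add: Lp_def e0)
      next
        case False
        have "i - 1 \<le> Suc n" using i by (simp add: m_def)
        then have "q (i-1) < e (Suc (i-1))" using q by blast
        then show ?thesis using False by (simp add: Lp_def)
      qed
      moreover have "e i \<le> Rp q m i"
      proof (cases "i = m")
        case True then show ?thesis by (simp add: Rp_def em)
      next
        case False then show ?thesis using q[of i] i by (simp add: Rp_def m_def less_imp_le)
      qed
      ultimately show ?thesis by simp
    qed
    have eine: "poly (P m) (e i) \<noteq> 0" using esign[OF i] by auto
    have open_ne: "poly (P m) y \<noteq> 0" if "Lp q m i < y" "y < Rp q m i" for y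
    proof
      assume "poly (P m) y = 0"
      then obtain k where k: "k < m" "y = q k" using roots by auto
      show False
      proof (cases "k < i")
        case True
        have im1: "i - 1 < m" using i True by linarith
        have "q k \<le> q (i - 1)"
        proof (cases "k = i - 1")
          case False then have "k < i - 1" using True by linarith
          then show ?thesis using qmono[of k "i-1"] im1 by simp
        qed simp
        then show False using that k True by (simp add: Lp_def)
      next
        case False
        then have im: "i < m" using k by simp
        then have "q i \<le> q k" using qmono[of i k] False k by (cases "k = i") auto
        then show False using that k im by (simp add: Rp_def)
      qed
    qed
    fix y assume y: "min (e i) t \<le> y" "y \<le> max (e i) t"
    show "poly (P m) y \<noteq> 0"
    proof (cases "y = e i")
      case True then show ?thesis using eine by simp
    next
      case False
      then have "Lp q m i < y" "y < Rp q m i" using y LeR t by auto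
      then show ?thesis using open_ne by blast
    qed
  qed
  have Kq: "K m q" unfolding K_def using qmono qrange roots qsign by blast
  have Iq: "\<forall>i<Suc n. q i < s i \<and> s i < q (Suc i)"
  proof (intro allI impI)
    fix i assume i: "i < Suc n"
    have "q i < e (Suc i)" using q[of i] i by simp
    moreover have "e (Suc i) < q (Suc i)" using q[of "Suc i"] i by simp
    moreover have "e (Suc i) = s i" using i by (simp add: e_def)
    ultimately show "q i < s i \<and> s i < q (Suc i)" by simp
  qed
  show ?thesis using Kq Iq unfolding m_def by blast
qed

lemma K0: "K 0 (\<lambda>_. 0)"
  unfolding K_def Lp_def Rp_def by auto

lemma K1: "K 1 (\<lambda>_. 0)"
proof -
  have i: "(\<lambda>_. 0::real) ` {..<1::nat} = {0}" by (rule image_constant) simp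
  have r: "{x. poly (P 1) x = 0} = (\<lambda>_::nat. 0::real) ` {..<1::nat}" unfolding i by auto
  have s: "(-1)^(1-i) * poly (P 1) t > 0" if "i \<le> 1" "Lp (\<lambda>_. 0) 1 i < t" "t < Rp (\<lambda>_. 0) 1 i" for i t
  proof (cases "i = 0")
    case True then show ?thesis using that by (simp add: Lp_def Rp_def)
  next
    case False then have "i = 1" using that by simp
    then show ?thesis using that by (simp add: Lp_def Rp_def)
  qed
  show ?thesis unfolding K_def using r s u0 v0 by auto
qed

lemma all_K: "\<exists>r s. K n r \<and> K (Suc n) s \<and> (\<forall>i<n. s i < r i \<and> r i < s (Suc i))"
proof (induction n)
  case 0 then show ?case using K0 K1 by auto
next
  case (Suc n)
  then obtain r s where "K n r" "K (Suc n) s" "\<forall>i<n. s i < r i \<and> r i < s (Suc i)" by blast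
  then obtain q where "K (Suc (Suc n)) q" "\<forall>i<Suc n. q i < s i \<and> s i < q (Suc i)" using step by blast
  then show ?case using \<open>K (Suc n) s\<close> by blast
qed

end


lemma sl_map:
  fixes r :: "nat \<Rightarrow> real"
  assumes "\<And>i j. i < j \<Longrightarrow> j < n \<Longrightarrow> r i < r j"
  shows "sorted_list_of_set (r ` {..<n}) = map r [0..<n]"
proof -
  have sw: "sorted_wrt (<) (map r [0..<n])" using assms by (simp add: sorted_wrt_iff_nth_less)
  have "set (map r [0..<n]) = r ` {..<n}" by (simp add: atLeast0LessThan)
  then show ?thesis using sw
    by (metis sorted_list_of_set.idem_if_sorted_distinct strict_sorted_iff top_greatest list.map_ident)
qed

lemma poly_of_real_map: "poly (map_poly of_real p) (of_real x) = (of_real (poly p x) :: complex)"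
  by (induction p) (auto simp: map_poly_pCons)

context ilace begin

lemma K_card: assumes "K n r" shows "card {x. poly (P n) x = 0} = n"
proof -
  have m: "\<And>i j. i < j \<Longrightarrow> j < n \<Longrightarrow> r i < r j" and e: "{x. poly (P n) x = 0} = r ` {..<n}"
    using assms unfolding K_def by auto
  have "inj_on r {..<n}"
  proof (rule inj_onI)
    fix i j assume "i \<in> {..<n}" "j \<in> {..<n}" "r i = r j"
    then show "i = j" using m[of i j] m[of j i] by (metis lessThan_iff linorder_neqE_nat less_irrefl)
  qed
  then show ?thesis using e card_image by fastforce
qed

lemma main_n:
  "(\<forall>z::complex. poly (map_poly of_real (P n)) z = 0 \<longrightarrow> z \<in> \<real>)
   \<and> P n \<noteq> 0 \<and> degree (P n) = n
   \<and> card {x. poly (P n) x = 0} = n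
   \<and> {x. poly (P n) x = 0} \<subseteq> {u <..< v}
   \<and> strictly_interlaces {x. poly (P (Suc n)) x = 0} {x. poly (P n) x = 0}"
proof -
  obtain r s where Kr: "K n r" and Ks: "K (Suc n) s" and I: "\<forall>i<n. s i < r i \<and> r i < s (Suc i)"
    using all_K by blast
  have rm: "\<And>i j. i < j \<Longrightarrow> j < n \<Longrightarrow> r i < r j" and rr: "\<And>i. i < n \<Longrightarrow> u < r i \<and> r i < v"
    and re: "{x. poly (P n) x = 0} = r ` {..<n}" using Kr unfolding K_def by auto
  have sm: "\<And>i j. i < j \<Longrightarrow> j < Suc n \<Longrightarrow> s i < s j"
    and se: "{x. poly (P (Suc n)) x = 0} = s ` {..<Suc n}" using Ks unfolding K_def by auto
  have cn: "card {x. poly (P n) x = 0} = n" using K_card[OF Kr] .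
  have cs: "card {x. poly (P (Suc n)) x = 0} = Suc n" using K_card[OF Ks] .
  have deg: "degree (P n) = n"
  proof -
    have "n \<le> degree (P n)" using card_poly_roots_bound[OF P_ne[of n]] cn by simp
    then show ?thesis using W_degree_le[of a b c d n] by simp
  qed
  have sub: "{x. poly (P n) x = 0} \<subseteq> {u <..< v}" using re rr by auto
  have cplx: "\<forall>z::complex. poly (map_poly of_real (P n)) z = 0 \<longrightarrow> z \<in> \<real>"
  proof (intro allI impI, rule ccontr)
    fix z :: complex
    assume z: "poly (map_poly of_real (P n)) z = 0" and nz: "z \<notin> \<real>"
    define Q where "Q = (map_poly of_real (P n) :: complex poly)"
    have Qne: "Q \<noteq> 0"
    proof
      assume "Q = 0"
      then have "poly Q (of_real v) = 0" by simp
      then show False using Wv[of n] by (simp add: Q_def poly_of_real_map)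
    qed
    have dQ: "degree Q = n" using deg by (simp add: Q_def degree_map_poly)
    define R :: "complex set" where "R = of_real ` {x. poly (P n) x = 0}"
    have finR: "finite {x. poly (P n) x = 0}" using poly_roots_finite[OF P_ne] .
    have cR: "card R = n" unfolding R_def using cn by (simp add: card_image inj_on_def)
    have RQ: "insert z R \<subseteq> {x. poly Q x = 0}"
      using z by (auto simp: R_def Q_def poly_of_real_map)
    have zR: "z \<notin> R" using nz by (auto simp: R_def)
    have "Suc n = card (insert z R)" using zR cR finR by (simp add: R_def)
    also have "\<dots> \<le> card {x. poly Q x = 0}" using RQ poly_roots_finite[OF Qne] card_mono by (metis calculation)
    also have "\<dots> \<le> n" using card_poly_roots_bound[OF Qne] dQ by simp
    finally show False by simp
  qed
  have il: "strictly_interlaces {x. poly (P (Suc n)) x = 0} {x. poly (P n) x = 0}"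
  proof -
    have l1: "sorted_list_of_set {x. poly (P (Suc n)) x = 0} = map s [0..<Suc n]"
      unfolding se by (rule sl_map) (rule sm)
    have l2: "sorted_list_of_set {x. poly (P n) x = 0} = map r [0..<n]"
      unfolding re by (rule sl_map) (rule rm)
    have fin: "finite {x. poly (P n) x = 0}" "finite {x. poly (P (Suc n)) x = 0}"
      using poly_roots_finite[OF P_ne] by auto
    show ?thesis unfolding strictly_interlaces_def Let_def l1 l2
      using fin cn cs I by (auto simp: nth_append) (metis Suc_lessI)
  qed
  show ?thesis using cplx P_ne deg cn sub il by blast
qed

end


context ilace begin

lemma roots_fin: "finite {x. poly (P n) x = 0}" using poly_roots_finite[OF P_ne] .

lemma roots_ne: "n \<ge> 1 \<Longrightarrow> {x. poly (P n) x = 0} \<noteq> {}"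
  using main_n[of n] by auto

lemma roots_sub: "poly (P n) x = 0 \<Longrightarrow> u < x \<and> x < v"
  using main_n[of n] by auto

definition M where "M n = Max {x. poly (P n) x = 0}"
definition N where "N n = Min {x. poly (P n) x = 0}"

lemma M_root: "n \<ge> 1 \<Longrightarrow> poly (P n) (M n) = 0"
  unfolding M_def using Max_in[OF roots_fin roots_ne] by auto
lemma N_root: "n \<ge> 1 \<Longrightarrow> poly (P n) (N n) = 0"
  unfolding N_def using Min_in[OF roots_fin roots_ne] by auto
lemma M_ge: "poly (P n) x = 0 \<Longrightarrow> x \<le> M n"
  unfolding M_def using Max_ge[OF roots_fin] by auto
lemma N_le: "poly (P n) x = 0 \<Longrightarrow> N n \<le> x"
  unfolding N_def using Min_le[OF roots_fin] by auto

lemma MN_mono: assumes "n \<ge> 1" shows "M n \<le> M (Suc n) \<and> N (Suc n) \<le> N n"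
proof -
  obtain r s where Kr: "K n r" and Ks: "K (Suc n) s" and I: "\<forall>i<n. s i < r i \<and> r i < s (Suc i)"
    using all_K by blast
  have rm: "\<And>i j. i < j \<Longrightarrow> j < n \<Longrightarrow> r i < r j"
    and re: "{x. poly (P n) x = 0} = r ` {..<n}" using Kr unfolding K_def by auto
  have se: "{x. poly (P (Suc n)) x = 0} = s ` {..<Suc n}" using Ks unfolding K_def by auto
  obtain k where k: "k < n" "M n = r k" using M_root[OF assms] re by auto
  obtain l where l: "l < n" "N n = r l" using N_root[OF assms] re by auto
  have "r k \<le> r (n - 1)"
  proof (cases "k = n - 1")
    case False then have "k < n - 1" using k by linarith
    then show ?thesis using rm[of k "n-1"] k by simp
  qed simp
  also have "r (n - 1) < s n" using I[rule_format, of "n-1"] assms by simp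
  also have "s n \<le> M (Suc n)" using se by (intro M_ge) auto
  finally have 1: "M n \<le> M (Suc n)" using k by simp
  have "N (Suc n) \<le> s 0" using se by (intro N_le) auto
  also have "s 0 < r 0" using I assms by simp
  also have "r 0 \<le> r l"
  proof (cases "l = 0")
    case False then show ?thesis using rm[of 0 l] l by simp
  qed simp
  finally have 2: "N (Suc n) \<le> N n" using l by simp
  show ?thesis using 1 2 by simp
qed

lemma MN_mono2: assumes "m \<ge> 1" "m \<le> n" shows "M m \<le> M n \<and> N n \<le> N m"
proof -
  have "M m \<le> M (m + k) \<and> N (m + k) \<le> N m" for k
  proof (induction k)
    case 0 then show ?case by simp
  next
    case (Suc k)
    then show ?case using MN_mono[of "m + k"] assms by auto
  qed
  from this[of "n - m"] show ?thesis using assms by simp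
qed

lemma lim_v:
  assumes Ev: "\<And>\<epsilon>. \<epsilon> > 0 \<Longrightarrow> \<exists>x n. v - \<epsilon> < x \<and> x < v \<and> poly (P n) x < 0"
  shows "limit_of_zeros P v"
proof -
  have conv: "M \<longlonglongrightarrow> v"
  proof (rule LIMSEQ_I)
    fix \<epsilon> :: real assume e: "\<epsilon> > 0"
    obtain x n where x: "v - \<epsilon> < x" "x < v" "poly (P n) x < 0" using Ev[OF e] by blast
    have n1: "n \<ge> 1" using x(3) by (cases n) auto
    obtain y where y: "x < y" "y < v" "poly (P n) y = 0" using poly_IVT_pos[OF x(2) x(3) Wv] by blast
    have My: "y \<le> M n" using M_ge[OF y(3)] .
    show "\<exists>no. \<forall>k\<ge>no. norm (M k - v) < \<epsilon>"
    proof (intro exI allI impI)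
      fix k assume k: "n \<le> k"
      have "M n \<le> M k" using MN_mono2[OF n1 k] by simp
      moreover have "M k < v" using roots_sub[OF M_root] n1 k by simp
      ultimately show "norm (M k - v) < \<epsilon>" using My x y by simp
    qed
  qed
  show ?thesis unfolding limit_of_zeros_def
  proof (intro exI conjI)
    show "\<forall>\<^sub>F n in sequentially. poly (map_poly of_real (P n)) (complex_of_real (M n)) = 0"
      unfolding eventually_sequentially using M_root by (auto simp: poly_of_real_map)
    show "(\<lambda>n. complex_of_real (M n)) \<longlonglongrightarrow> complex_of_real v"
      using conv by (rule tendsto_of_real)
  qed
qed

lemma lim_u:
  assumes Eu: "\<And>\<epsilon>. \<epsilon> > 0 \<Longrightarrow> \<exists>x n. u < x \<and> x < u + \<epsilon> \<and> (-1)^n * poly (P n) x < 0"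
  shows "limit_of_zeros P u"
proof -
  have conv: "N \<longlonglongrightarrow> u"
  proof (rule LIMSEQ_I)
    fix \<epsilon> :: real assume e: "\<epsilon> > 0"
    obtain x n where x: "u < x" "x < u + \<epsilon>" "(-1)^n * poly (P n) x < 0" using Eu[OF e] by blast
    have n1: "n \<ge> 1" using x(3) by (cases n) auto
    have "poly (P n) x * poly (P n) u < 0" using opp_sign[OF x(3) Wu] .
    then have "poly (P n) u * poly (P n) x < 0" by (simp add: mult.commute)
    then obtain y where y: "u < y" "y < x" "poly (P n) y = 0" using poly_IVT[OF x(1)] by blast
    have Ny: "N n \<le> y" using N_le[OF y(3)] .
    show "\<exists>no. \<forall>k\<ge>no. norm (N k - u) < \<epsilon>"
    proof (intro exI allI impI)
      fix k assume k: "n \<le> k"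
      have "N k \<le> N n" using MN_mono2[OF n1 k] by simp
      moreover have "u < N k" using roots_sub[OF N_root] n1 k by simp
      ultimately show "norm (N k - u) < \<epsilon>" using Ny x y by simp
    qed
  qed
  show ?thesis unfolding limit_of_zeros_def
  proof (intro exI conjI)
    show "\<forall>\<^sub>F n in sequentially. poly (map_poly of_real (P n)) (complex_of_real (N n)) = 0"
      unfolding eventually_sequentially using N_root by (auto simp: poly_of_real_map)
    show "(\<lambda>n. complex_of_real (N n)) \<longlonglongrightarrow> complex_of_real u"
      using conv by (rule tendsto_of_real)
  qed
qed

end


locale prm =
  fixes a b c d :: real
  assumes a0: "a > 0" and c0: "c > 0" and b0: "b < 0" and d0: "d < 0"
    and xAB: "xA a b < xB c d"
begin

definition DD where "DD = DeltaDelta a b c d"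
definition sr where "sr = sqrt DD"
definition xm where "xm = xDelta_minus a b c d"
definition xp where "xp = xDelta_plus a b c d"
definition F where "F = Fq a b c d"
definition Dg where "Dg = Delta_g a b c d"
definition gm where "gm = xg_minus a b c d"
definition gp where "gp = xg_plus a b c d"

definition Af where "Af x = a*x + b"
definition Bf where "Bf x = c*x + d"
definition Dl where "Dl x = (a*x+b)^2 + 4*(c*x+d)"
definition g where "g x = x^2 - (a*x+b)*x - (c*x+d)"
definition h where "h x = 2*x - (a*x+b)"

lemma ad_bc: "a*d < b*c"
proof -
  have "-b/a < -d/c" using xAB by (simp add: xA_def xB_def)
  then have "(-b/a) * (a*c) < (-d/c) * (a*c)" using a0 c0 by (intro mult_strict_right_mono) auto
  then show ?thesis using a0 c0 by (simp add: field_simps)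
qed

lemma DD_eq: "DD = c^2 + a*b*c - a^2*d"
  unfolding DD_def DeltaDelta_def xA_def using a0 by (simp add: field_simps power2_eq_square)

lemma DD_gt: "DD > c^2"
proof -
  have "a*(b*c - a*d) > 0" using a0 ad_bc by simp
  then show ?thesis unfolding DD_eq by (simp add: algebra_simps power2_eq_square)
qed

lemma DD_nn: "DD \<ge> 0"
proof -
  have "c^2 \<ge> 0" by simp
  then show ?thesis using DD_gt by linarith
qed
lemma s_sq: "sr^2 = DD" using real_sqrt_pow2[OF DD_nn] by (simp add: sr_def)

lemma s_gt: "sr > c"
proof -
  have "c^2 < sr^2" using DD_gt s_sq by simp
  moreover have "sr \<ge> 0" using DD_nn by (simp add: sr_def)
  ultimately show ?thesis using c0 by (smt (verit) power_mono)
qed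

lemma xm_eq: "xm = -b/a - 2*(c + sr)/a^2"
  unfolding xm_def xDelta_minus_def xA_def sr_def DD_def using a0 by (simp add: field_simps)
lemma xp_eq: "xp = -b/a + 2*(sr - c)/a^2"
  unfolding xp_def xDelta_plus_def xA_def sr_def DD_def using a0 by (simp add: field_simps)

lemma Dl_fact: "Dl x = a^2 * (x - xm) * (x - xp)"
proof -
  define p where "p = -b/a - 2*c/a^2"
  define q where "q = 2* sr/a^2"
  have m: "xm = p - q" and pp: "xp = p + q" unfolding xm_eq xp_eq p_def q_def using a0 by (simp_all add: field_simps)
  have "a^2 * (x - xm) * (x - xp) = a^2 * ((x - p)^2 - q^2)" unfolding m pp by (simp add: power2_eq_square algebra_simps)
  also have "q^2 = 4 * DD / (a^2*a^2)" unfolding q_def using s_sq by (simp add: power_divide power_mult_distrib power2_eq_square)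
  also have "a^2 * ((x - p)^2 - 4 * DD / (a^2*a^2)) = Dl x"
    unfolding Dl_def p_def DD_eq using a0 by (simp add: field_simps power2_eq_square)
  finally show ?thesis by simp
qed

lemma xm_lt_xp: "xm < xp"
proof -
  have "sr > 0" using s_gt c0 by simp
  then show ?thesis unfolding xm_eq xp_eq using a0 by (simp add: field_simps)
qed

lemma xp_pos: "xp > 0"
proof -
  have "-b/a > 0" using a0 b0 by (simp add: divide_neg_pos)
  moreover have "2*(sr - c)/a^2 > 0" using s_gt a0 by simp
  ultimately show ?thesis unfolding xp_eq by simp
qed

lemma A_xp: "a*xp + b > 0"
proof -
  have "a*xp + b = 2*(sr - c)/a" unfolding xp_eq using a0 by (simp add: field_simps power2_eq_square)
  then show ?thesis using s_gt a0 by simp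
qed

lemma A_xm: "a*xm + b < 0"
proof -
  have "a*xm + b = -2*(sr + c)/a" unfolding xm_eq using a0 by (simp add: field_simps power2_eq_square)
  then show ?thesis using s_gt a0 c0 by (simp add: divide_neg_pos)
qed

lemma Dl_xp: "Dl xp = 0" and Dl_xm: "Dl xm = 0" by (simp_all add: Dl_fact)

lemma B_xp: "c*xp + d < 0"
proof -
  have "(a*xp+b)^2 + 4*(c*xp+d) = 0" using Dl_xp by (simp add: Dl_def)
  moreover have "(a*xp+b)^2 > 0" using A_xp by simp
  ultimately show ?thesis by (smt (verit))
qed

lemma g_h: "4 * g x = h x^2 - Dl x"
  by (simp add: g_def h_def Dl_def power2_eq_square algebra_simps)

lemma Dl_neg: "xm < x \<Longrightarrow> x < xp \<Longrightarrow> Dl x < 0"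
  unfolding Dl_fact using a0 by (simp add: mult_pos_neg mult_less_0_iff)
lemma Dl_posl: "x < xm \<Longrightarrow> Dl x > 0"
proof -
  assume x: "x < xm"
  have "(x - xm)*(x - xp) > 0" using x xm_lt_xp by (intro mult_neg_neg) auto
  then show ?thesis unfolding Dl_fact using a0 by (simp add: mult.assoc)
qed
lemma Dl_posr: "xp < x \<Longrightarrow> Dl x > 0"
  unfolding Dl_fact using a0 xm_lt_xp by simp

lemma F_eq: "F = d*(a-2)^2 + b*c*(2-a) + b^2"
  unfolding F_def Fq_def Delta_g_def DD_def[symmetric] DD_eq by (simp add: power2_eq_square algebra_simps)

lemma Dg_eq: "Dg = F + DD"
  unfolding F_def Fq_def Dg_def DD_def by simp

lemma h_x0: "a \<noteq> 2 \<Longrightarrow> h x = (2-a)*(x - b/(2-a))"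
  unfolding h_def by (simp add: field_simps)

lemma Dl_x0: "a \<noteq> 2 \<Longrightarrow> (2-a)^2 * Dl (b/(2-a)) = 4*F"
proof -
  assume a: "a \<noteq> 2"
  define k where "k = 2 - a"
  have k: "k \<noteq> 0" using a by (simp add: k_def)
  have ak: "a = 2 - k" by (simp add: k_def)
  have e1: "a*(b/k) + b = 2*b/k" unfolding ak using k by (simp add: field_simps)
  have "k^2 * Dl (b/k) = k^2 * ((2*b/k)^2 + 4*(c*(b/k)+d))" unfolding Dl_def e1 by simp
  also have "\<dots> = 4*(b^2 + c*b*k + d*k^2)" using k by (simp add: field_simps power2_eq_square)
  also have "\<dots> = 4*F" unfolding F_eq k_def by (simp add: power2_eq_square algebra_simps)
  finally show ?thesis by (simp add: k_def)
qed

lemma g_x0: "a \<noteq> 2 \<Longrightarrow> (2-a)^2 * g (b/(2-a)) = -F"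
proof -
  assume a: "a \<noteq> 2"
  have "h (b/(2-a)) = 0" using h_x0[OF a] by simp
  then have "4 * g (b/(2-a)) = - Dl (b/(2-a))" using g_h by simp
  then have "(2-a)^2 * (4 * g (b/(2-a))) = (2-a)^2 * (- Dl (b/(2-a)))" by simp
  then have "4 * ((2-a)^2 * g (b/(2-a))) = - ((2-a)^2 * Dl (b/(2-a)))" by (simp add: algebra_simps)
  then show ?thesis using Dl_x0[OF a] by simp
qed

lemma g0: "g 0 > 0" using d0 by (simp add: g_def)

lemma g_fact:
  assumes a1: "a \<noteq> 1" and D: "Dg \<ge> 0"
  shows "g x = (1-a)*(x - gm)*(x - gp)" and "gm \<le> gp"
proof -
  define p where "p = (b+c)/(2*(1-a))"
  define q where "q = sqrt Dg / (2*\<bar>1-a\<bar>)"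
  have m: "gm = p - q" and pp: "gp = p + q"
    unfolding gm_def gp_def xg_minus_def xg_plus_def p_def q_def Dg_def using a1 by simp_all
  have q0: "q \<ge> 0" using D by (simp add: q_def)
  then show "gm \<le> gp" unfolding m pp by simp
  have q2: "q^2 = Dg / (4*(1-a)^2)" using D by (simp add: q_def power_divide power_mult_distrib)
  have "(1-a)*(x - gm)*(x - gp) = (1-a)*((x-p)^2 - q^2)" unfolding m pp by (simp add: power2_eq_square algebra_simps)
  also have "\<dots> = (1-a)*x^2 - 2*x*((1-a)*p) + (1-a)*(p^2 - q^2)" by (simp add: power2_eq_square algebra_simps)
  also have "(1-a)*p = (b+c)/2"
  proof -
    have k: "1 - a \<noteq> 0" using a1 by simp
    show ?thesis unfolding p_def using k by (simp add: field_simps)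
  qed
  also have "(1-a)*(p^2 - q^2) = -d"
  proof -
    have k: "1 - a \<noteq> 0" using a1 by simp
    have "p^2 - q^2 = ((b+c)^2 - Dg)/(4*(1-a)^2)" unfolding q2 p_def by (simp add: power_divide power_mult_distrib diff_divide_distrib power2_eq_square algebra_simps)
    also have "(b+c)^2 - Dg = -4*d*(1-a)" by (simp add: Dg_def Delta_g_def)
    finally have "p^2 - q^2 = -4*d*(1-a)/(4*(1-a)^2)" .
    then have "(1-a)*(p^2 - q^2) = ((1-a)*(-4*d*(1-a)))/(4*(1-a)^2)" by simp
    also have "(1-a)*(-4*d*(1-a)) = -d*(4*(1-a)^2)" by (simp add: power2_eq_square algebra_simps)
    also have "-d*(4*(1-a)^2)/(4*(1-a)^2) = -d" using k by simp
    finally show ?thesis .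
  qed
  also have "(1-a)*x^2 - 2*x*((b+c)/2) + -d = g x" by (simp add: g_def power2_eq_square algebra_simps)
  finally show "g x = (1-a)*(x - gm)*(x - gp)" by simp
qed

lemma V_rec: "(-1)^(Suc (Suc n)) * poly (W a b c d (Suc (Suc n))) x
   = (-(a*x+b)) * ((-1)^(Suc n) * poly (W a b c d (Suc n)) x) + (c*x+d) * ((-1)^n * poly (W a b c d n) x)"
  unfolding W_rec_poly by (simp add: algebra_simps)

lemma W1: "poly (W a b c d 1) x = x" by (simp add: One_nat_def)

lemma osc_W: assumes "Dl x < 0" shows "\<exists>n. poly (W a b c d n) x < 0"
proof -
  have D: "(a*x+b)^2 + 4*(c*x+d) < 0" using assms by (simp add: Dl_def)
  show ?thesis using seq_osc[of "\<lambda>n. poly (W a b c d n) x", OF W_rec_poly _ D] by simp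
qed

lemma osc_V: assumes "Dl x < 0" shows "\<exists>n. (-1)^n * poly (W a b c d n) x < 0"
proof -
  have D: "(-(a*x+b))^2 + 4*(c*x+d) < 0" unfolding power2_minus using assms by (simp add: Dl_def)
  show ?thesis using seq_osc[of "\<lambda>n. (-1)^n * poly (W a b c d n) x", OF V_rec _ D] by simp
qed

lemma real_W:
  assumes "Dl x > 0" "c*x+d < 0" "a*x+b > 0" "h x < 0" "g x > 0"
  shows "\<exists>n. poly (W a b c d n) x < 0"
proof -
  have D: "(a*x+b)^2 + 4*(c*x+d) > 0" using assms by (simp add: Dl_def)
  have hh: "2*x < a*x+b" using assms by (simp add: h_def)
  have gg: "x^2 - (a*x+b)*x - (c*x+d) > 0" using assms by (simp add: g_def)
  show ?thesis using seq_real_neg[of "\<lambda>n. poly (W a b c d n) x", OF W_rec_poly _ W1 D assms(2) assms(3) hh gg] by simp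
qed

lemma real_V:
  assumes "Dl x > 0" "c*x+d < 0" "a*x+b < 0" "h x > 0" "g x > 0"
  shows "\<exists>n. (-1)^n * poly (W a b c d n) x < 0"
proof -
  have D: "(-(a*x+b))^2 + 4*(c*x+d) > 0" unfolding power2_minus using assms by (simp add: Dl_def)
  have hh: "2*(-x) < -(a*x+b)" using assms by (simp add: h_def)
  have gg: "(-x)^2 - (-(a*x+b))*(-x) - (c*x+d) > 0" using assms by (simp add: g_def algebra_simps)
  have a': "-(a*x+b) > 0" using assms by simp
  have f1: "(-1)^1 * poly (W a b c d 1) x = -x" by (simp add: W1)
  show ?thesis using seq_real_neg[of "\<lambda>n. (-1)^n * poly (W a b c d n) x", OF V_rec _ f1 D assms(2) a' hh gg] by simp
qed

lemma pos_D_W: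
  assumes "Dl x = 0" "a*x+b > 0" "h x \<ge> 0"
  shows "poly (W a b c d n) x > 0"
proof -
  have m: "((a*x+b)/2)^2 = (a*x+b) * ((a*x+b)/2) + (c*x+d)"
    using assms(1) unfolding Dl_def by (simp add: power2_eq_square field_simps)
  have m1: "(a*x+b)/2 > 0" "(a*x+b) - (a*x+b)/2 \<ge> 0" "x \<ge> (a*x+b)/2" using assms by (auto simp: h_def)
  show ?thesis using seq_pos[of "\<lambda>n. poly (W a b c d n) x", OF W_rec_poly _ W1 m m1] by simp
qed

lemma pos_D_V:
  assumes "Dl x = 0" "a*x+b < 0" "h x \<le> 0"
  shows "(-1)^n * poly (W a b c d n) x > 0"
proof -
  have m: "(-(a*x+b)/2)^2 = (-(a*x+b)) * (-(a*x+b)/2) + (c*x+d)"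
    using assms(1) unfolding Dl_def by (simp add: power2_eq_square field_simps)
  have m1: "-(a*x+b)/2 > 0" "-(a*x+b) - (-(a*x+b)/2) \<ge> 0" "-x \<ge> -(a*x+b)/2" using assms by (auto simp: h_def)
  have f1: "(-1)^1 * poly (W a b c d 1) x = -x" by (simp add: W1)
  show ?thesis using seq_pos[of "\<lambda>n. (-1)^n * poly (W a b c d n) x", OF V_rec _ f1 m m1] by simp
qed

lemma root_W: assumes "g x = 0" shows "poly (W a b c d n) x = x^n"
proof -
  have r: "x^2 = (a*x+b)*x + (c*x+d)" using assms by (simp add: g_def)
  show ?thesis using seq_root_pow[of "\<lambda>n. poly (W a b c d n) x", OF W_rec_poly _ W1 r] by simp
qed

end


lemma prod_neg_iff:
  fixes x p q :: real assumes "p \<le> q"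
  shows "(x - p)*(x - q) < 0 \<longleftrightarrow> p < x \<and> x < q"
proof
  assume h: "(x - p)*(x - q) < 0"
  show "p < x \<and> x < q"
  proof (rule ccontr)
    assume "\<not> (p < x \<and> x < q)"
    then consider "x \<le> p" | "q \<le> x" by linarith
    then have "(x - p)*(x - q) \<ge> 0"
    proof cases
      case 1 then show ?thesis using assms by (intro mult_nonpos_nonpos) auto
    next
      case 2 then show ?thesis using assms by (intro mult_nonneg_nonneg) auto
    qed
    then show False using h by simp
  qed
next
  assume "p < x \<and> x < q"
  then show "(x - p)*(x - q) < 0" by (intro mult_pos_neg) auto
qed

lemma prod_pos_iff:
  fixes x p q :: real assumes "p \<le> q"
  shows "(x - p)*(x - q) > 0 \<longleftrightarrow> x < p \<or> q < x"
proof
  assume h: "(x - p)*(x - q) > 0"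
  show "x < p \<or> q < x"
  proof (rule ccontr)
    assume "\<not> (x < p \<or> q < x)"
    then have "(x - p)*(x - q) \<le> 0" by (intro mult_nonneg_nonpos) auto
    then show False using h by simp
  qed
next
  assume "x < p \<or> q < x"
  then show "(x - p)*(x - q) > 0"
  proof
    assume "x < p" then show ?thesis using assms by (intro mult_neg_neg) auto
  next
    assume "q < x" then show ?thesis using assms by (intro mult_pos_pos) auto
  qed
qed

context prm begin

lemma Dl_nonpos: "xm \<le> x \<Longrightarrow> x \<le> xp \<Longrightarrow> Dl x \<le> 0"
proof -
  assume "xm \<le> x" "x \<le> xp"
  then have "(x - xm) * (x - xp) \<le> 0" by (simp add: mult_nonneg_nonpos)
  then show "Dl x \<le> 0" unfolding Dl_fact using a0 by (simp add: mult.assoc mult_nonneg_nonpos)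
qed

lemma Bmono: "x \<le> y \<Longrightarrow> c*x + d \<le> c*y + d" using c0 by simp
lemma Amono: "x < y \<Longrightarrow> a*x + b < a*y + b" using a0 by simp

lemma VD:
  assumes "h xp \<ge> 0"
  shows "\<forall>n. poly (W a b c d n) xp > 0"
    and "\<And>\<epsilon>. \<epsilon> > 0 \<Longrightarrow> \<exists>x n. xp - \<epsilon> < x \<and> x < xp \<and> poly (W a b c d n) x < 0"
proof -
  show "\<forall>n. poly (W a b c d n) xp > 0" using pos_D_W[OF Dl_xp A_xp assms] by blast
  fix \<epsilon> :: real assume e: "\<epsilon> > 0"
  define x where "x = max ((xm + xp)/2) (xp - \<epsilon>/2)"
  have x1: "(xm + xp)/2 \<le> x" "xp - \<epsilon>/2 \<le> x" unfolding x_def by simp_all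
  have x2: "x < xp" unfolding x_def using xm_lt_xp e by (simp add: max_less_iff_conj)
  have x: "xm < x" "x < xp" "xp - \<epsilon> < x" using x1 x2 xm_lt_xp e by auto
  obtain n where "poly (W a b c d n) x < 0" using osc_W[OF Dl_neg[OF x(1,2)]] by blast
  then show "\<exists>x n. xp - \<epsilon> < x \<and> x < xp \<and> poly (W a b c d n) x < 0" using x by blast
qed

lemma VG:
  assumes gv: "g v = 0" and v0: "v > 0" and xpv: "xp < v" and Bv: "c * v + d < 0"
    and gh: "\<And>x. xp < x \<Longrightarrow> x < v \<Longrightarrow> g x > 0 \<and> h x < 0"
  shows "\<forall>n. poly (W a b c d n) v > 0"
    and "\<And>\<epsilon>. \<epsilon> > 0 \<Longrightarrow> \<exists>x n. v - \<epsilon> < x \<and> x < v \<and> poly (W a b c d n) x < 0"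
proof -
  show "\<forall>n. poly (W a b c d n) v > 0" using root_W[OF gv] v0 by simp
  fix \<epsilon> :: real assume e: "\<epsilon> > 0"
  define x where "x = max ((xp + v)/2) (v - \<epsilon>/2)"
  have x1: "(xp + v)/2 \<le> x" "v - \<epsilon>/2 \<le> x" unfolding x_def by simp_all
  have x2: "x < v" unfolding x_def using xpv e by (simp add: max_less_iff_conj)
  have x: "xp < x" "x < v" "v - \<epsilon> < x" using x1 x2 xpv e by auto
  have B: "c*x+d < 0" using Bmono[of x v] x Bv by simp
  have A: "a*x+b > 0" using Amono[OF x(1)] A_xp by simp
  obtain n where "poly (W a b c d n) x < 0"
    using real_W[OF Dl_posr[OF x(1)] B A] gh[OF x(1,2)] by blast
  then show "\<exists>x n. v - \<epsilon> < x \<and> x < v \<and> poly (W a b c d n) x < 0" using x by blast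
qed

lemma UD:
  assumes "h xm \<le> 0"
  shows "\<forall>n. (-1)^n * poly (W a b c d n) xm > 0"
    and "\<And>\<epsilon>. \<epsilon> > 0 \<Longrightarrow> \<exists>x n. xm < x \<and> x < xm + \<epsilon> \<and> (-1)^n * poly (W a b c d n) x < 0"
proof -
  show "\<forall>n. (-1)^n * poly (W a b c d n) xm > 0" using pos_D_V[OF Dl_xm A_xm assms] by blast
  fix \<epsilon> :: real assume e: "\<epsilon> > 0"
  define x where "x = min ((xm + xp)/2) (xm + \<epsilon>/2)"
  have x1: "x \<le> (xm + xp)/2" "x \<le> xm + \<epsilon>/2" unfolding x_def by (rule min.cobounded1, rule min.cobounded2)
  have x2: "xm < x" unfolding x_def using xm_lt_xp e by simp
  have x: "xm < x" "x < xp" "x < xm + \<epsilon>" using x1 x2 xm_lt_xp e by auto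
  obtain n where "(-1)^n * poly (W a b c d n) x < 0" using osc_V[OF Dl_neg[OF x(1,2)]] by blast
  then show "\<exists>x n. xm < x \<and> x < xm + \<epsilon> \<and> (-1)^n * poly (W a b c d n) x < 0" using x by blast
qed

lemma UG:
  assumes gu: "g u = 0" and u0: "u < 0" and uxm: "u < xm"
    and gh: "\<And>x. u < x \<Longrightarrow> x < xm \<Longrightarrow> g x > 0 \<and> h x > 0"
  shows "\<forall>n. (-1)^n * poly (W a b c d n) u > 0"
    and "\<And>\<epsilon>. \<epsilon> > 0 \<Longrightarrow> \<exists>x n. u < x \<and> x < u + \<epsilon> \<and> (-1)^n * poly (W a b c d n) x < 0"
proof -
  show "\<forall>n. (-1)^n * poly (W a b c d n) u > 0"
  proof
    fix n
    have "(-1)^n * poly (W a b c d n) u = (-1)^n * u^n" using root_W[OF gu] by simp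
    also have "\<dots> = (-u)^n" by (rule power_minus[symmetric])
    finally have "(-1)^n * poly (W a b c d n) u = (-u)^n" .
    then show "(-1)^n * poly (W a b c d n) u > 0" using u0 by simp
  qed
  fix \<epsilon> :: real assume e: "\<epsilon> > 0"
  define x where "x = min ((u + xm)/2) (u + \<epsilon>/2)"
  have x1: "x \<le> (u + xm)/2" "x \<le> u + \<epsilon>/2" unfolding x_def by (rule min.cobounded1, rule min.cobounded2)
  have x2: "u < x" unfolding x_def using uxm e by simp
  have x: "u < x" "x < xm" "x < u + \<epsilon>" using x1 x2 uxm e by auto
  have B: "c*x+d < 0" using Bmono[of x xp] x xm_lt_xp B_xp by simp
  have A: "a*x+b < 0" using Amono[OF x(2)] A_xm by simp
  obtain n where "(-1)^n * poly (W a b c d n) x < 0"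
    using real_V[OF Dl_posl[OF x(2)] B A] gh[OF x(1,2)] by blast
  then show "\<exists>x n. u < x \<and> x < u + \<epsilon> \<and> (-1)^n * poly (W a b c d n) x < 0" using x by blast
qed

lemma g_concave: assumes "a > 1" shows "g x > 0 \<longleftrightarrow> gm < x \<and> x < gp"
proof -
  have "d*(1-a) > 0" using assms d0 by (intro mult_neg_neg) auto
  moreover have "(b+c)^2 \<ge> 0" by simp
  ultimately have D: "Dg \<ge> 0" unfolding Dg_def Delta_g_def by linarith
  have f: "g x = (1-a)*((x - gm)*(x - gp))" using g_fact(1)[OF _ D] assms by (simp add: mult.assoc)
  have o: "gm \<le> gp" using g_fact(2)[OF _ D] assms by simp
  have k: "1 - a < 0" using assms by simp
  have "g x > 0 \<longleftrightarrow> (x - gm)*(x - gp) < 0" unfolding f using k by (simp add: zero_less_mult_iff)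
  also have "\<dots> \<longleftrightarrow> gm < x \<and> x < gp" using prod_neg_iff[OF o] .
  finally show ?thesis .
qed

lemma g_convex: assumes "a < 1" "F > 0" shows "g x < 0 \<longleftrightarrow> gm < x \<and> x < gp" and "g x > 0 \<longleftrightarrow> x < gm \<or> gp < x"
proof -
  have D: "Dg \<ge> 0" using Dg_eq assms DD_nn by simp
  have f: "g x = (1-a)*((x - gm)*(x - gp))" using g_fact(1)[OF _ D] assms by (simp add: mult.assoc)
  have o: "gm \<le> gp" using g_fact(2)[OF _ D] assms by simp
  have k: "1 - a > 0" using assms by simp
  have "g x < 0 \<longleftrightarrow> (x - gm)*(x - gp) < 0" unfolding f using k by (simp add: mult_less_0_iff)
  also have "\<dots> \<longleftrightarrow> gm < x \<and> x < gp" using prod_neg_iff[OF o] .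
  finally show "g x < 0 \<longleftrightarrow> gm < x \<and> x < gp" .
  have "g x > 0 \<longleftrightarrow> (x - gm)*(x - gp) > 0" unfolding f using k by (simp add: zero_less_mult_iff)
  also have "\<dots> \<longleftrightarrow> x < gm \<or> gp < x" using prod_pos_iff[OF o] .
  finally show "g x > 0 \<longleftrightarrow> x < gm \<or> gp < x" .
qed

lemma g_root_m: assumes "a \<noteq> 1" "Dg \<ge> 0" shows "g gm = 0" using g_fact(1)[OF assms, of gm] by simp
lemma g_root_p: assumes "a \<noteq> 1" "Dg \<ge> 0" shows "g gp = 0" using g_fact(1)[OF assms, of gp] by simp

lemma g_xm: "4 * g xm = h xm ^2" using g_h[of xm] Dl_xm by simp
lemma g_xp: "4 * g xp = h xp ^2" using g_h[of xp] Dl_xp by simp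

end


lemma sgn_helper:
  fixes k y z :: real assumes k: "k > 0" and e: "k * y = z"
  shows "(y > 0 \<longleftrightarrow> z > 0)" "(y < 0 \<longleftrightarrow> z < 0)" "(y \<le> 0 \<longleftrightarrow> z \<le> 0)" "(y \<ge> 0 \<longleftrightarrow> z \<ge> 0)"
proof -
  have y: "y = z / k" using k e by (simp add: field_simps)
  show "(y > 0 \<longleftrightarrow> z > 0)" unfolding y using k by (simp add: zero_less_divide_iff)
  show "(y < 0 \<longleftrightarrow> z < 0)" unfolding y using k by (simp add: divide_less_0_iff)
  show "(y \<le> 0 \<longleftrightarrow> z \<le> 0)" unfolding y using k by (simp add: divide_le_0_iff)
  show "(y \<ge> 0 \<longleftrightarrow> z \<ge> 0)" unfolding y using k by (simp add: zero_le_divide_iff)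
qed

context prm begin

definition vgood where
  "vgood v \<longleftrightarrow> 0 < v \<and> c * v + d < 0 \<and> (\<forall>n. poly (W a b c d n) v > 0)
     \<and> (\<forall>\<epsilon>>0. \<exists>x n. v - \<epsilon> < x \<and> x < v \<and> poly (W a b c d n) x < 0)"
definition ugood where
  "ugood u \<longleftrightarrow> u < 0 \<and> (\<forall>n. (-1)^n * poly (W a b c d n) u > 0)
     \<and> (\<forall>\<epsilon>>0. \<exists>x n. u < x \<and> x < u + \<epsilon> \<and> (-1)^n * poly (W a b c d n) x < 0)"

lemma vgood_xp: "h xp \<ge> 0 \<Longrightarrow> vgood xp"
  unfolding vgood_def using VD[of] xp_pos B_xp by blast

lemma ugood_xm: "h xm \<le> 0 \<Longrightarrow> xm < 0 \<Longrightarrow> ugood xm"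
  unfolding ugood_def using UD by blast

lemma vgood_G:
  assumes "g v = 0" "v > 0" "xp < v" "c * v + d < 0"
    "\<And>x. xp < x \<Longrightarrow> x < v \<Longrightarrow> g x > 0 \<and> h x < 0"
  shows "vgood v"
  unfolding vgood_def using VG[OF assms] assms(2,4) by blast

lemma ugood_G:
  assumes "g u = 0" "u < 0" "u < xm"
    "\<And>x. u < x \<Longrightarrow> x < xm \<Longrightarrow> g x > 0 \<and> h x > 0"
  shows "ugood u"
  unfolding ugood_def using UG[OF assms] assms(2) by blast

lemma left_of_xm: "Dl y > 0 \<Longrightarrow> y < 0 \<Longrightarrow> y < xm"
  using Dl_nonpos[of y] xp_pos by force

lemma between: "Dl y < 0 \<Longrightarrow> xm < y \<and> y < xp"
proof -
  assume D: "Dl y < 0"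
  have "\<not> y < xm" using Dl_posl[of y] D by auto
  moreover have "y \<noteq> xm" using Dl_xm D by auto
  moreover have "\<not> xp < y" using Dl_posr[of y] D by auto
  moreover have "y \<noteq> xp" using Dl_xp D by auto
  ultimately show ?thesis by linarith
qed

lemma k2: "a \<noteq> 2 \<Longrightarrow> (2-a)^2 > 0" by simp

lemma Dl_x0_sgn: assumes "a \<noteq> 2"
  shows "Dl (b/(2-a)) > 0 \<longleftrightarrow> F > 0" "Dl (b/(2-a)) < 0 \<longleftrightarrow> F < 0"
    "Dl (b/(2-a)) \<le> 0 \<longleftrightarrow> F \<le> 0" "Dl (b/(2-a)) \<ge> 0 \<longleftrightarrow> F \<ge> 0"
  using sgn_helper[OF k2[OF assms] Dl_x0[OF assms]] by simp_all

lemma g_x0_sgn: assumes "a \<noteq> 2"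
  shows "g (b/(2-a)) < 0 \<longleftrightarrow> F > 0" "g (b/(2-a)) > 0 \<longleftrightarrow> F < 0"
  using sgn_helper[OF k2[OF assms] g_x0[OF assms]] by simp_all

lemma h_xp_a2: "a \<le> 2 \<Longrightarrow> h xp \<ge> 0"
proof -
  assume "a \<le> 2"
  then have "(2-a)*xp \<ge> 0" using xp_pos by simp
  then show ?thesis unfolding h_def using b0 by (simp add: algebra_simps)
qed

lemma case1:
  assumes "a < 2" "F \<le> 0" shows "ugood xm" "vgood xp"
proof -
  show "vgood xp" using vgood_xp h_xp_a2 assms by simp
  have a2: "a \<noteq> 2" using assms by simp
  define x0 where "x0 = b/(2-a)"
  have D: "Dl x0 \<le> 0" using Dl_x0_sgn(3)[OF a2] assms by (simp add: x0_def)
  have "xm \<le> x0" using Dl_posl[of x0] D by force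
  moreover have "x0 < 0" using assms b0 by (simp add: x0_def divide_neg_pos)
  moreover have "h xm = (2-a)*(xm - x0)" using h_x0[OF a2] by (simp add: x0_def)
  ultimately have "h xm \<le> 0" "xm < 0" using assms by (simp_all add: mult_nonneg_nonpos)
  then show "ugood xm" using ugood_xm by simp
qed

lemma Dg_gt1: "a > 1 \<Longrightarrow> Dg \<ge> 0"
proof -
  assume a: "a > 1"
  have "d*(1-a) > 0" using a d0 by (intro mult_neg_neg) auto
  moreover have "(b+c)^2 \<ge> 0" by simp
  ultimately show "Dg \<ge> 0" unfolding Dg_def Delta_g_def by linarith
qed

lemma Bg: "g y = 0 \<Longrightarrow> c*y + d = y * (h y - y)"
  unfolding g_def h_def by (simp add: power2_eq_square algebra_simps)

lemma case2:
  assumes a: "a > 2" and F: "F < 0" shows "ugood gm" "vgood gp"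
proof -
  have a2: "a \<noteq> 2" and a1: "a \<noteq> 1" using a by simp_all
  have Dg: "Dg \<ge> 0" using Dg_gt1 a by simp
  define x0 where "x0 = b/(2-a)"
  have hx: "\<And>x. h x = (2-a)*(x - x0)" using h_x0[OF a2] by (simp add: x0_def)
  have "Dl x0 < 0" using Dl_x0_sgn(2)[OF a2] F by (simp add: x0_def)
  then have x0: "xm < x0" "x0 < xp" using between by auto
  have hxp: "h xp < 0" unfolding hx using x0 a by (simp add: mult_neg_pos)
  have hxm: "h xm > 0" unfolding hx using x0 a by (simp add: mult_neg_neg)
  have gxp: "g xp > 0" using g_xp hxp by (smt (verit) zero_less_power2)
  have gxm: "g xm > 0" using g_xm hxm by (smt (verit) zero_less_power2)
  have gc: "\<And>x. g x > 0 \<longleftrightarrow> gm < x \<and> x < gp" using g_concave a by simp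
  have r1: "gm < xp" "xp < gp" using gc[of xp] gxp by auto
  have r2: "gm < xm" "xm < gp" using gc[of xm] gxm by auto
  have r3: "gm < 0" "0 < gp" using gc[of 0] g0 by auto
  show "vgood gp"
  proof (rule vgood_G)
    show "g gp = 0" using g_root_p[OF a1 Dg] .
    show "0 < gp" using r3 by simp
    show "xp < gp" using r1 by simp
    have "h gp < 0" unfolding hx using x0 r1 a by (simp add: mult_neg_pos)
    then show "c * gp + d < 0" unfolding Bg[OF g_root_p[OF a1 Dg]] using r3 by (simp add: mult_pos_neg)
    fix x assume "xp < x" "x < gp"
    then show "g x > 0 \<and> h x < 0" using gc r1 x0 a unfolding hx by (simp add: mult_neg_pos)
  qed
  show "ugood gm"
  proof (rule ugood_G)
    show "g gm = 0" using g_root_m[OF a1 Dg] .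
    show "gm < 0" using r3 by simp
    show "gm < xm" using r2 by simp
    fix x assume "gm < x" "x < xm"
    then show "g x > 0 \<and> h x > 0" using gc r2 x0 a unfolding hx by (simp add: mult_neg_neg)
  qed
qed

lemma case3:
  assumes a: "a < 1" and F: "F > 0" shows "ugood gp" "vgood xp"
proof -
  show "vgood xp" using vgood_xp h_xp_a2 a by simp
  have a2: "a \<noteq> 2" and a1: "a \<noteq> 1" using a by simp_all
  have Dg: "Dg \<ge> 0" using Dg_eq F DD_nn by simp
  define x0 where "x0 = b/(2-a)"
  have hx: "\<And>x. h x = (2-a)*(x - x0)" using h_x0[OF a2] by (simp add: x0_def)
  have x0n: "x0 < 0" using a b0 by (simp add: x0_def divide_neg_pos)
  have "g x0 < 0" using g_x0_sgn(1)[OF a2] F by (simp add: x0_def)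
  then have r1: "gm < x0" "x0 < gp" using g_convex(1)[OF a F] by auto
  have "\<not> (gm > 0)" using r1 x0n by simp
  then have gpn: "gp < 0" using g_convex(2)[OF a F, of 0] g0 by auto
  have "Dl x0 > 0" using Dl_x0_sgn(1)[OF a2] F by (simp add: x0_def)
  then have x0m: "x0 < xm" using left_of_xm x0n by simp
  have hxm: "h xm > 0" unfolding hx using x0m a by simp
  have gxm: "g xm > 0" using g_xm hxm by (smt (verit) zero_less_power2)
  have "xm < gm \<or> gp < xm" using g_convex(2)[OF a F] gxm by simp
  then have gpxm: "gp < xm" using r1 x0m by linarith
  show "ugood gp"
  proof (rule ugood_G)
    show "g gp = 0" using g_root_p[OF a1 Dg] .
    show "gp < 0" using gpn .
    show "gp < xm" using gpxm .
    fix x assume "gp < x" "x < xm"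
    then show "g x > 0 \<and> h x > 0" using g_convex(2)[OF a F, of x] r1 a unfolding hx by simp
  qed
qed

lemma h_xp_case4: assumes "\<not> (a > 2 \<and> F < 0)" shows "h xp \<ge> 0"
proof (cases "a \<le> 2")
  case True then show ?thesis using h_xp_a2 by simp
next
  case False
  then have a: "a > 2" and a2: "a \<noteq> 2" by simp_all
  then have F: "F \<ge> 0" using assms by simp
  define x0 where "x0 = b/(2-a)"
  have hx: "\<And>x. h x = (2-a)*(x - x0)" using h_x0[OF a2] by (simp add: x0_def)
  have x0p: "x0 > 0" using a b0 by (simp add: x0_def divide_neg_neg)
  have "h x0 = 0" using hx by simp
  then have "a*x0 + b = 2*x0" by (simp add: h_def)
  then have "a*x0 + b > a*xm + b" using x0p A_xm by simp
  then have xmx0: "xm < x0" using a0 by simp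
  have "Dl x0 \<ge> 0" using Dl_x0_sgn(4)[OF a2] F by (simp add: x0_def)
  then have "xp \<le> x0" using Dl_neg[of x0] xmx0 by force
  then show ?thesis unfolding hx using a by (simp add: mult_nonpos_nonpos)
qed

lemma case4:
  assumes n1: "\<not> (a < 2 \<and> F \<le> 0)" and n2: "\<not> (a > 2 \<and> F < 0)" and n3: "\<not> (a < 1 \<and> F > 0)"
  shows "ugood gm" "vgood xp"
proof -
  show "vgood xp" using vgood_xp h_xp_case4 n2 by simp
  have a1: "a \<ge> 1" using n1 n3 by auto
  show "ugood gm"
  proof (cases "a = 1")
    case False
    then have a: "a > 1" and a1': "a \<noteq> 1" using a1 by auto
    have Dg: "Dg \<ge> 0" using Dg_gt1 a by simp
    have gc: "\<And>x. g x > 0 \<longleftrightarrow> gm < x \<and> x < gp" using g_concave a by simp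
    have r3: "gm < 0" "0 < gp" using gc[of 0] g0 by auto
    have H: "h xm > 0 \<and> (\<forall>x. gm < x \<longrightarrow> x < xm \<longrightarrow> h x > 0)"
    proof -
      consider "a < 2" | "a = 2" | "a > 2" by linarith
      then show ?thesis
      proof cases
        case 1
        then have a2: "a \<noteq> 2" and F: "F > 0" using n1 by auto
        define x0 where "x0 = b/(2-a)"
        have hx: "\<And>x. h x = (2-a)*(x - x0)" using h_x0[OF a2] by (simp add: x0_def)
        have x0n: "x0 < 0" using 1 b0 by (simp add: x0_def divide_neg_pos)
        have "Dl x0 > 0" using Dl_x0_sgn(1)[OF a2] F by (simp add: x0_def)
        then have x0m: "x0 < xm" using left_of_xm x0n by simp
        have "g x0 < 0" using g_x0_sgn(1)[OF a2] F by (simp add: x0_def)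
        then have "x0 \<le> gm" using gc[of x0] r3 x0n by auto
        then show ?thesis unfolding hx using x0m 1 by simp
      next
        case 2
        have "\<And>x. h x = -b" unfolding h_def using 2 by simp
        then show ?thesis using b0 by simp
      next
        case 3
        then have a2: "a \<noteq> 2" by simp
        define x0 where "x0 = b/(2-a)"
        have hx: "\<And>x. h x = (2-a)*(x - x0)" using h_x0[OF a2] by (simp add: x0_def)
        have x0p: "x0 > 0" using 3 b0 by (simp add: x0_def divide_neg_neg)
        have "h x0 = 0" using hx by simp
        then have "a*x0 + b = 2*x0" by (simp add: h_def)
        then have "a*x0 + b > a*xm + b" using x0p A_xm by simp
        then have xmx0: "xm < x0" using a0 by simp
        show ?thesis unfolding hx using xmx0 3 by (auto simp: mult_neg_neg)
      qed
    qed
    have gxm: "g xm > 0" using g_xm H by (smt (verit) zero_less_power2)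
    then have r2: "gm < xm" "xm < gp" using gc[of xm] by auto
    show ?thesis
    proof (rule ugood_G)
      show "g gm = 0" using g_root_m[OF a1' Dg] .
      show "gm < 0" using r3 by simp
      show "gm < xm" using r2 by simp
      fix x assume "gm < x" "x < xm"
      then show "g x > 0 \<and> h x > 0" using gc r2 H by auto
    qed
  next
    case True
    then have F: "F > 0" using n1 by auto
    have Fe: "F = d + b*(b+c)" using F_eq True by (simp add: power2_eq_square algebra_simps)
    have "b*(b+c) > 0" using Fe F d0 by linarith
    then have bc: "b + c < 0" using b0 by (simp add: zero_less_mult_iff)
    have gmd: "gm = -d/(b+c)" unfolding gm_def xg_minus_def using True by simp
    have gl: "\<And>x. g x = -(b+c)*(x - gm)" unfolding gmd g_def using bc True
      by (simp add: field_simps power2_eq_square)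
    have gmn: "gm < 0" unfolding gmd using bc d0 by (simp add: divide_neg_neg)
    have hl: "\<And>x. h x = x - b" unfolding h_def using True by simp
    have a2: "a \<noteq> 2" using True by simp
    have "g b < 0" using g_x0_sgn(1)[OF a2] F True by simp
    then have bgm: "b < gm" unfolding gl using bc by (simp add: mult_less_0_iff)
    have "Dl b > 0" using Dl_x0_sgn(1)[OF a2] F True by simp
    then have bxm: "b < xm" using left_of_xm b0 by simp
    have "h xm > 0" using hl bxm by simp
    then have "g xm > 0" using g_xm by (smt (verit) zero_less_power2)
    then have gmxm: "gm < xm" unfolding gl using bc by (simp add: zero_less_mult_iff)
    show ?thesis
    proof (rule ugood_G)
      show "g gm = 0" using gl by simp
      show "gm < 0" using gmn .
      show "gm < xm" using gmxm .
      fix x assume "gm < x" "x < xm"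
      then show "g x > 0 \<and> h x > 0" unfolding gl hl using bc bgm by (simp add: mult_pos_pos)
    qed
  qed
qed

lemma all_cases: "ugood (bound_u a b c d) \<and> vgood (bound_v a b c d)"
proof -
  have u: "bound_u a b c d = (if a < 2 \<and> F \<le> 0 then xm else if a > 2 \<and> F < 0 then gm
      else if a < 1 \<and> F > 0 then gp else gm)"
    by (simp add: bound_u_def F_def xm_def gm_def gp_def)
  have v: "bound_v a b c d = (if a < 2 \<and> F \<le> 0 then xp else if a > 2 \<and> F < 0 then gp else xp)"
    by (simp add: bound_v_def F_def xp_def gp_def)
  show ?thesis unfolding u v using case1 case2 case3 case4 by auto
qed

end


context prm begin

lemma prm_main:
  "(\<forall>n. (\<forall>z::complex. poly (map_poly of_real (W a b c d n)) z = 0 \<longrightarrow> z \<in> \<real>)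
            \<and> W a b c d n \<noteq> 0 \<and> degree (W a b c d n) = n
            \<and> card {x. poly (W a b c d n) x = 0} = n
            \<and> {x. poly (W a b c d n) x = 0} \<subseteq> {bound_u a b c d <..< bound_v a b c d}
            \<and> strictly_interlaces {x. poly (W a b c d (Suc n)) x = 0} {x. poly (W a b c d n) x = 0})
         \<and> limit_of_zeros (W a b c d) (bound_u a b c d)
         \<and> limit_of_zeros (W a b c d) (bound_v a b c d)"
proof -
  define U where "U = bound_u a b c d"
  define V where "V = bound_v a b c d"
  have ug: "ugood U" and vg: "vgood V" using all_cases by (simp_all add: U_def V_def)
  have il: "ilace a b c d U V"
  proof
    show "U < 0" using ug by (simp add: ugood_def)
    show "0 < V" using vg by (simp add: vgood_def)
    fix x :: real assume "x < V"
    then have "c*x + d < c * V + d" using c0 by simp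
    then show "c*x + d < 0" using vg by (simp add: vgood_def)
  next
    fix n show "poly (W a b c d n) V > 0" using vg by (simp add: vgood_def)
  next
    fix n show "(-1)^n * poly (W a b c d n) U > 0" using ug by (simp add: ugood_def)
  qed
  have A: "\<forall>n. (\<forall>z::complex. poly (map_poly of_real (W a b c d n)) z = 0 \<longrightarrow> z \<in> \<real>)
            \<and> W a b c d n \<noteq> 0 \<and> degree (W a b c d n) = n
            \<and> card {x. poly (W a b c d n) x = 0} = n
            \<and> {x. poly (W a b c d n) x = 0} \<subseteq> {U <..< V}
            \<and> strictly_interlaces {x. poly (W a b c d (Suc n)) x = 0} {x. poly (W a b c d n) x = 0}"
    using ilace.main_n[OF il] by blast
  have B: "limit_of_zeros (W a b c d) V"
    by (rule ilace.lim_v[OF il]) (use vg in \<open>auto simp: vgood_def\<close>)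
  have C: "limit_of_zeros (W a b c d) U"
    by (rule ilace.lim_u[OF il]) (use ug in \<open>auto simp: ugood_def\<close>)
  show ?thesis using A B C by (simp add: U_def V_def)
qed

end

theorem theorem3p4:
  fixes a b c d :: real
  assumes "a > 0" and "c > 0" and "b < 0" and "d < 0"
    and "xA a b < xB c d"
  shows "(\<forall>n. (\<forall>z::complex. poly (map_poly of_real (W a b c d n)) z = 0 \<longrightarrow> z \<in> \<real>)
            \<and> W a b c d n \<noteq> 0 \<and> degree (W a b c d n) = n
            \<and> card {x. poly (W a b c d n) x = 0} = n
            \<and> {x. poly (W a b c d n) x = 0} \<subseteq> {bound_u a b c d <..< bound_v a b c d}
            \<and> strictly_interlaces {x. poly (W a b c d (Suc n)) x = 0} {x. poly (W a b c d n) x = 0})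
         \<and> limit_of_zeros (W a b c d) (bound_u a b c d)
         \<and> limit_of_zeros (W a b c d) (bound_v a b c d)"
proof -
  interpret prm a b c d using assms by unfold_locales
  show ?thesis by (rule prm_main)
qed


end
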